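(* For every integer $k\geq 0$, every $(2k+1)$-strong tournament is $(k+2)^{*}$-weakly connected.
   Context: A tournament is a digraph in which each pair of distinct vertices is joined by exactly one arc. A digraph is $m$-strong if it has more than $m$ vertices and remains strongly connected after deleting any set of fewer than $m$ vertices (equivalently, for each ordered pair $x,y$ there are $m$ internally disjoint $(x,y)$-paths). For distinct vertices $u,v$ of a digraph $D$, a weak $k^{*}$-container between $u$ and $v$ is a set of $k$ internally disjoint paths, each of which is either a $(u,v)$-path or a $(v,u)$-path (different paths may have different directions), whose union contains every vertex of $D$. $D$ is $k^{*}$-weakly connected if there is a weak $k^{*}$-container between every two distinct vertices of $D$. *)

theory Defs
  imports Main
begin

definition tournament :: "'a set \<Rightarrow> ('a \<times> 'a) set \<Rightarrow> bool" where
  "tournament V A \<longleftrightarrow> finite V \<and> A \<subseteq> V \<times> V \<and> (\<forall>x. (x, x) \<notin> A) \<and>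
     (\<forall>x\<in>V. \<forall>y\<in>V. x \<noteq> y \<longrightarrow> ((x, y) \<in> A \<longleftrightarrow> (y, x) \<notin> A))"

definition is_path :: "'a set \<Rightarrow> ('a \<times> 'a) set \<Rightarrow> 'a list \<Rightarrow> bool" where
  "is_path V A p \<longleftrightarrow> p \<noteq> [] \<and> distinct p \<and> set p \<subseteq> V \<and>
     (\<forall>i. Suc i < length p \<longrightarrow> (p ! i, p ! Suc i) \<in> A)"

definition is_path_from_to :: "'a set \<Rightarrow> ('a \<times> 'a) set \<Rightarrow> 'a list \<Rightarrow> 'a \<Rightarrow> 'a \<Rightarrow> bool" where
  "is_path_from_to V A p x y \<longleftrightarrow> is_path V A p \<and> hd p = x \<and> last p = y"

definition internal :: "'a list \<Rightarrow> 'a set" where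
  "internal p = set (butlast (tl p))"

definition strongly_connected :: "'a set \<Rightarrow> ('a \<times> 'a) set \<Rightarrow> bool" where
  "strongly_connected V A \<longleftrightarrow>
     (\<forall>x\<in>V. \<forall>y\<in>V. \<exists>p. is_path_from_to V (A \<inter> (V \<times> V)) p x y)"

definition m_strong :: "nat \<Rightarrow> 'a set \<Rightarrow> ('a \<times> 'a) set \<Rightarrow> bool" where
  "m_strong m V A \<longleftrightarrow> card V > m \<and>
     (\<forall>S. S \<subseteq> V \<longrightarrow> card S < m \<longrightarrow> strongly_connected (V - S) A)"

definition weak_container :: "nat \<Rightarrow> 'a set \<Rightarrow> ('a \<times> 'a) set \<Rightarrow> 'a \<Rightarrow> 'a \<Rightarrow> 'a list list \<Rightarrow> bool" where
  "weak_container k V A u v Ps \<longleftrightarrow> length Ps = k \<and> distinct Ps \<and>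
     (\<forall>p\<in>set Ps. is_path_from_to V A p u v \<or> is_path_from_to V A p v u) \<and>
     (\<forall>i<k. \<forall>j<k. i \<noteq> j \<longrightarrow> internal (Ps ! i) \<inter> internal (Ps ! j) = {}) \<and>
     V \<subseteq> (\<Union>p\<in>set Ps. set p)"

definition weakly_star_connected :: "nat \<Rightarrow> 'a set \<Rightarrow> ('a \<times> 'a) set \<Rightarrow> bool" where
  "weakly_star_connected k V A \<longleftrightarrow>
     (\<forall>u\<in>V. \<forall>v\<in>V. u \<noteq> v \<longrightarrow> (\<exists>Ps. weak_container k V A u v Ps))"

end

theory Submission imports Defs begin

abbreviation arcs :: "('a \<times> 'a) set \<Rightarrow> 'a \<Rightarrow> 'a \<Rightarrow> bool" where
  "arcs A \<equiv> (\<lambda>x y. (x, y) \<in> A)"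

lemma is_path_succ:
  "is_path V A p \<longleftrightarrow> p \<noteq> [] \<and> distinct p \<and> set p \<subseteq> V \<and> successively (arcs A) p"
  unfolding is_path_def successively_conv_nth by auto

lemma internal_eq:
  assumes "distinct p" "p \<noteq> []"
  shows "internal p = set p - {hd p, last p}"
proof (cases p)
  case Nil then show ?thesis using assms by simp
next
  case (Cons a q)
  show ?thesis
  proof (cases "q = []")
    case True then show ?thesis using Cons by (simp add: internal_def)
  next
    case False
    have "set q = insert (last q) (set (butlast q))" using False
      by (metis append_butlast_last_id list.simps(15) rotate1.simps(2) set_rotate1)
    moreover have "last q \<notin> set (butlast q)" using assms Cons False
      by (metis append_butlast_last_id distinct.simps(2) distinct_append distinct_singleton not_distinct_conv_prefix)
    moreover have "a \<notin> set q" using assms Cons by simp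
    ultimately show ?thesis using Cons False by (auto simp add: internal_def)
  qed
qed

lemma insert_block:
  assumes p: "is_path V A p" and i: "Suc i < length p" and B: "is_path V A B"
    and dis: "set B \<inter> set p = {}"
    and a1: "(p ! i, hd B) \<in> A" and a2: "(last B, p ! Suc i) \<in> A"
  shows "is_path V A (take (Suc i) p @ B @ drop (Suc i) p)
         \<and> hd (take (Suc i) p @ B @ drop (Suc i) p) = hd p
         \<and> last (take (Suc i) p @ B @ drop (Suc i) p) = last p
         \<and> set (take (Suc i) p @ B @ drop (Suc i) p) = set p \<union> set B"
proof -
  let ?x = "take (Suc i) p" and ?y = "drop (Suc i) p"
  have pe: "p = ?x @ ?y" by simp
  have xne: "?x \<noteq> []" using i by (cases p) auto
  have yne: "?y \<noteq> []" using i by simp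
  have lx: "last ?x = p ! i" using i xne by (simp add: last_conv_nth min_def)
  have hy: "hd ?y = p ! Suc i" using i by (simp add: hd_drop_conv_nth)
  have Bne: "B \<noteq> []" using B by (simp add: is_path_def)
  have sp: "successively (arcs A) p" using p by (simp add: is_path_succ)
  then have sx: "successively (arcs A) ?x" and sy: "successively (arcs A) ?y"
    by (metis pe successively_append_iff)+
  have sB: "successively (arcs A) B" using B by (simp add: is_path_succ)
  have "successively (arcs A) (?x @ B @ ?y)"
    using sx sy sB xne yne Bne lx hy a1 a2 by (simp add: successively_append_iff)
  moreover have "distinct (?x @ B @ ?y)"
  proof -
    have "distinct (?x @ ?y)" using p pe unfolding is_path_def by metis
    then have "distinct ?x \<and> distinct ?y \<and> set ?x \<inter> set ?y = {}" by (simp only: distinct_append)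
    moreover have "set ?x \<subseteq> set p" "set ?y \<subseteq> set p" by (auto dest: in_set_takeD in_set_dropD)
    ultimately show ?thesis using dis B unfolding is_path_def by (simp only: distinct_append set_append) blast
  qed
  moreover have "set (?x @ B @ ?y) = set p \<union> set B" 
  proof - 
    have "set p = set ?x \<union> set ?y" by (metis pe set_append)
    then show ?thesis by auto
  qed
  moreover have "set p \<subseteq> V" "set B \<subseteq> V" using p B by (auto simp: is_path_def)
  ultimately show ?thesis using xne yne
    by (auto simp: is_path_succ)
qed

lemma find_pos:
  assumes tot: "\<forall>l<length q. (q ! l, x) \<in> A \<or> (x, q ! l) \<in> A"
    and asym: "\<forall>l<length q. \<not> ((q ! l, x) \<in> A \<and> (x, q ! l) \<in> A)"
  shows "i < j \<Longrightarrow> j < length q \<Longrightarrow> (q ! i, x) \<in> A \<Longrightarrow> (x, q ! j) \<in> A \<Longrightarrow>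
    \<exists>l. i \<le> l \<and> Suc l \<le> j \<and> (q ! l, x) \<in> A \<and> (x, q ! Suc l) \<in> A"
proof (induction j)
  case 0 then show ?case by simp
next
  case (Suc j)
  show ?case
  proof (cases "(q ! j, x) \<in> A")
    case True then show ?thesis using Suc.prems by (intro exI[of _ j]) auto
  next
    case False
    have "j < length q" using Suc.prems by simp
    then have xj: "(x, q ! j) \<in> A" using tot False by blast
    show ?thesis
    proof (cases "i < j")
      case True
      then obtain l where "i \<le> l \<and> Suc l \<le> j \<and> (q ! l, x) \<in> A \<and> (x, q ! Suc l) \<in> A"
        using Suc.IH Suc.prems xj by auto
      then show ?thesis by (intro exI[of _ l]) auto
    next
      case False
      then have "i = j" using Suc.prems by auto
      then show ?thesis using asym Suc.prems xj by auto
    qed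
  qed
qed

lemma crossing:
  "p \<noteq> [] \<Longrightarrow> hd p \<in> X \<Longrightarrow> last p \<notin> X \<Longrightarrow>
    \<exists>i. Suc i < length p \<and> p ! i \<in> X \<and> p ! Suc i \<notin> X"
proof (induction p)
  case Nil then show ?case by simp
next
  case (Cons a q)
  show ?case
  proof (cases "q = []")
    case True then show ?thesis using Cons by simp
  next
    case False
    show ?thesis
    proof (cases "hd q \<in> X")
      case True
      then obtain i where "Suc i < length q \<and> q ! i \<in> X \<and> q ! Suc i \<notin> X"
        using Cons False by auto
      then show ?thesis by (intro exI[of _ "Suc i"]) auto
    next
      case F: False
      then show ?thesis using Cons False by (intro exI[of _ 0]) (auto simp: hd_conv_nth)
    qed
  qed
qed

lemma path_arc:
  "is_path V A p \<Longrightarrow> Suc i < length p \<Longrightarrow> (p ! i, p ! Suc i) \<in> A"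
  by (simp add: is_path_def)

lemma internal_full: "internal (u # g @ [v]) = set g"
  by (simp add: internal_def)

lemma tour_tot: "tournament V A \<Longrightarrow> a \<in> V \<Longrightarrow> b \<in> V \<Longrightarrow> a \<noteq> b \<Longrightarrow> (a, b) \<in> A \<or> (b, a) \<in> A"
  unfolding tournament_def by blast

lemma tour_asym: "tournament V A \<Longrightarrow> (a, b) \<in> A \<Longrightarrow> (b, a) \<notin> A"
  unfolding tournament_def by (cases "a = b") (auto dest!: subsetD)

lemma tour_V: "tournament V A \<Longrightarrow> (a, b) \<in> A \<Longrightarrow> a \<in> V \<and> b \<in> V"
  unfolding tournament_def by blast

lemma tour_irr: "tournament V A \<Longrightarrow> (a, a) \<notin> A"
  unfolding tournament_def by blast

definition cov :: "'a list list \<Rightarrow> 'a set" where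
  "cov Ps = (\<Union>p\<in>set Ps. set p)"

definition pre :: "nat \<Rightarrow> 'a set \<Rightarrow> ('a \<times> 'a) set \<Rightarrow> 'a \<Rightarrow> 'a \<Rightarrow> 'a list list \<Rightarrow> bool" where
  "pre n V A u v Ps \<longleftrightarrow> length Ps = n \<and> distinct Ps \<and>
     (\<forall>p\<in>set Ps. is_path_from_to V A p u v \<or> is_path_from_to V A p v u) \<and>
     (\<forall>i<n. \<forall>j<n. i \<noteq> j \<longrightarrow> internal (Ps ! i) \<inter> internal (Ps ! j) = {}) \<and>
     (\<forall>w\<in>V. (u, w) \<in> A \<longrightarrow> (w, v) \<in> A \<longrightarrow> (\<exists>p\<in>set Ps. hd p = u \<and> last p = v)) \<and>
     (\<forall>w\<in>V. (v, w) \<in> A \<longrightarrow> (w, u) \<in> A \<longrightarrow> (\<exists>p\<in>set Ps. hd p = v \<and> last p = u))"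

lemma cov_nth: "cov Ps = (\<Union>j<length Ps. set (Ps ! j))"
  unfolding cov_def set_conv_nth by blast

lemma internal_sub: "internal p \<subseteq> set p"
  unfolding internal_def by (cases p) (auto dest: in_set_butlastD)


lemma replace:
  assumes pr: "pre n V A u v Ps" and uv: "u \<noteq> v" and i: "i < n"
    and p': "is_path V A p'" "hd p' = hd (Ps ! i)" "last p' = last (Ps ! i)"
    and sp': "set p' = set (Ps ! i) \<union> B" and Bne: "B \<noteq> {}" and Bc: "B \<inter> cov Ps = {}"
  shows "pre n V A u v (Ps[i := p']) \<and> cov (Ps[i := p']) = cov Ps \<union> B"
proof -
  have len: "length Ps = n" using pr by (simp add: pre_def)
  have Pi: "Ps ! i \<in> set Ps" using i len by simp
  have ft: "is_path_from_to V A (Ps ! i) u v \<or> is_path_from_to V A (Ps ! i) v u"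
    using pr Pi by (simp add: pre_def)
  have ft': "is_path_from_to V A p' u v \<or> is_path_from_to V A p' v u"
    using ft p' by (auto simp: is_path_from_to_def)
  have dPi: "distinct (Ps ! i)" "Ps ! i \<noteq> []" using ft by (auto simp: is_path_from_to_def is_path_def)
  have dp': "distinct p'" "p' \<noteq> []" using p' by (auto simp: is_path_def)
  have uvc: "hd (Ps ! i) \<in> cov Ps" "last (Ps ! i) \<in> cov Ps" using dPi Pi unfolding cov_def by (meson UN_iff hd_in_set last_in_set)+
  have int': "internal p' = internal (Ps ! i) \<union> B"
    using internal_eq[OF dp'] internal_eq[OF dPi] sp' p' uvc Bc by auto
  obtain b where b: "b \<in> B" using Bne by auto
  have "p' \<notin> set Ps" using b Bc sp' unfolding cov_def by auto
  then have dist: "distinct (Ps[i := p'])"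
    using pr by (intro distinct_list_update) (auto simp: pre_def)
  have intsub: "\<And>j. j < n \<Longrightarrow> internal (Ps ! j) \<subseteq> cov Ps"
    using len internal_sub unfolding cov_def by (metis UN_upper nth_mem order_trans)
  have disj: "\<forall>a<n. \<forall>c<n. a \<noteq> c \<longrightarrow> internal (Ps[i := p'] ! a) \<inter> internal (Ps[i := p'] ! c) = {}"
  proof (intro allI impI)
    fix a c assume a: "a < n" and c: "c < n" and ac: "a \<noteq> c"
    have d0: "internal (Ps ! a) \<inter> internal (Ps ! c) = {}" using pr a c ac by (simp add: pre_def)
    show "internal (Ps[i := p'] ! a) \<inter> internal (Ps[i := p'] ! c) = {}"
      using d0 int' intsub[OF a] intsub[OF c] Bc a c ac len i by (auto simp: nth_list_update)
  qed
  have paths: "\<forall>p\<in>set (Ps[i := p']). is_path_from_to V A p u v \<or> is_path_from_to V A p v u"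
    using pr ft' set_update_subset_insert[of Ps i p'] by (auto simp: pre_def)
  have keep: "\<And>x y. (\<exists>p\<in>set Ps. hd p = x \<and> last p = y) \<Longrightarrow> (\<exists>p\<in>set (Ps[i := p']). hd p = x \<and> last p = y)"
  proof -
    fix x y assume "\<exists>p\<in>set Ps. hd p = x \<and> last p = y"
    then obtain j where j: "j < n" "hd (Ps ! j) = x" "last (Ps ! j) = y" using len by (auto simp: in_set_conv_nth)
    show "\<exists>p\<in>set (Ps[i := p']). hd p = x \<and> last p = y"
    proof (cases "j = i")
      case True then show ?thesis using j p' len i by (intro bexI[of _ p']) (auto simp: set_update_memI)
    next
      case False then show ?thesis using j len by (intro bexI[of _ "Ps ! j"]) (auto simp: in_set_conv_nth nth_list_update intro!: exI[of _ j])
    qed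
  qed
  have "pre n V A u v (Ps[i := p'])"
    unfolding pre_def using len dist paths disj keep pr unfolding pre_def by auto
  moreover have "cov (Ps[i := p']) = cov Ps \<union> B"
  proof -
    have e: "\<And>j. j < n \<Longrightarrow> set (Ps[i := p'] ! j) = (if j = i then set (Ps ! i) \<union> B else set (Ps ! j))"
      using len i sp' by (simp add: nth_list_update)
    have "(\<Union>j<n. set (Ps[i := p'] ! j)) = (\<Union>j<n. set (Ps ! j)) \<union> B"
    proof
      show "(\<Union>j<n. set (Ps[i := p'] ! j)) \<subseteq> (\<Union>j<n. set (Ps ! j)) \<union> B"
        using e by (auto split: if_splits)
      show "(\<Union>j<n. set (Ps ! j)) \<union> B \<subseteq> (\<Union>j<n. set (Ps[i := p'] ! j))"
      proof
        fix x assume "x \<in> (\<Union>j<n. set (Ps ! j)) \<union> B"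
        then show "x \<in> (\<Union>j<n. set (Ps[i := p'] ! j))"
        proof
          assume "x \<in> B" then show ?thesis using e[OF i] i by auto
        next
          assume "x \<in> (\<Union>j<n. set (Ps ! j))"
          then obtain j where j: "j < n" "x \<in> set (Ps ! j)" by auto
          then show ?thesis using e[OF j(1)] by (cases "j = i") (auto intro!: bexI[of _ j])
        qed
      qed
    qed
    then show ?thesis unfolding cov_nth using len by simp
  qed
  ultimately show ?thesis by simp
qed

lemma pre_path:
  assumes "pre n V A u v Ps" "i < n" "u \<noteq> v"
  shows "is_path V A (Ps ! i) \<and> (hd (Ps ! i) = u \<and> last (Ps ! i) = v \<or> hd (Ps ! i) = v \<and> last (Ps ! i) = u)
     \<and> 2 \<le> length (Ps ! i) \<and> Ps ! i ! 0 = hd (Ps ! i) \<and> Ps ! i ! (length (Ps ! i) - 1) = last (Ps ! i)"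
proof -
  have "Ps ! i \<in> set Ps" using assms by (simp add: pre_def)
  then have ft: "is_path_from_to V A (Ps ! i) u v \<or> is_path_from_to V A (Ps ! i) v u"
    using assms by (simp add: pre_def)
  then have ne: "Ps ! i \<noteq> []" by (auto simp: is_path_from_to_def is_path_def)
  have hl: "hd (Ps ! i) \<noteq> last (Ps ! i)" using ft assms(3) by (auto simp: is_path_from_to_def)
  have "2 \<le> length (Ps ! i)"
  proof (rule ccontr)
    assume "\<not> 2 \<le> length (Ps ! i)"
    moreover have "length (Ps ! i) \<noteq> 0" using ne by simp
    ultimately have "length (Ps ! i) = 1" by linarith
    then obtain a where "Ps ! i = [a]" by (metis One_nat_def length_0_conv length_Suc_conv)
    then show False using hl by simp
  qed
  moreover have "Ps ! i ! 0 = hd (Ps ! i)" using ne by (simp add: hd_conv_nth)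
  moreover have "Ps ! i ! (length (Ps ! i) - 1) = last (Ps ! i)" using ne by (simp add: last_conv_nth)
  moreover have "is_path V A (Ps ! i) \<and> (hd (Ps ! i) = u \<and> last (Ps ! i) = v \<or> hd (Ps ! i) = v \<and> last (Ps ! i) = u)"
    using ft unfolding is_path_from_to_def by blast
  ultimately show ?thesis by blast
qed

lemma pre_cov:
  assumes "pre n V A u v Ps" "u \<noteq> v"
  shows "cov Ps \<subseteq> V" "0 < n \<Longrightarrow> u \<in> cov Ps" "0 < n \<Longrightarrow> v \<in> cov Ps"
proof -
  have "\<And>p. p \<in> set Ps \<Longrightarrow> set p \<subseteq> V"
  proof -
    fix p assume "p \<in> set Ps"
    then have "is_path_from_to V A p u v \<or> is_path_from_to V A p v u" using assms by (simp add: pre_def)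
    then show "set p \<subseteq> V" unfolding is_path_from_to_def is_path_def by blast
  qed
  then show "cov Ps \<subseteq> V" unfolding cov_def by blast
next
  assume n: "0 < n"
  have len: "length Ps = n" using assms by (simp add: pre_def)
  have p0: "Ps ! 0 \<in> set Ps" using n len by simp
  have "is_path_from_to V A (Ps ! 0) u v \<or> is_path_from_to V A (Ps ! 0) v u"
    using assms p0 by (simp add: pre_def)
  then have "u \<in> set (Ps ! 0) \<and> v \<in> set (Ps ! 0)"
    by (auto simp: is_path_from_to_def is_path_def)
  then show "u \<in> cov Ps" "v \<in> cov Ps" using p0 unfolding cov_def by blast+
qed

lemma cov_elem:
  assumes "c \<in> cov Ps" "length Ps = n"
  shows "\<exists>i<n. \<exists>j<length (Ps ! i). c = Ps ! i ! j"
  using assms unfolding cov_nth by (auto simp: in_set_conv_nth)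

lemma step:
  assumes T: "tournament V A" and sc: "strongly_connected V A" and pr: "pre n V A u v Ps"
    and uv: "u \<noteq> v" and n: "0 < n" and w: "w \<in> V" "w \<notin> cov Ps"
  shows "\<exists>Ps'. pre n V A u v Ps' \<and> cov Ps \<subset> cov Ps'"
proof -
  have len: "length Ps = n" using pr by (simp add: pre_def)
  have covV: "cov Ps \<subseteq> V" and uc: "u \<in> cov Ps" and vc: "v \<in> cov Ps"
    using pre_cov[OF pr uv] n by auto
  note PP = pre_path[OF pr _ uv]
  have Pc: "\<And>i j. i < n \<Longrightarrow> j < length (Ps ! i) \<Longrightarrow> Ps ! i ! j \<in> cov Ps"
    using len unfolding cov_nth by (metis UN_I lessThan_iff nth_mem)
  show ?thesis
  proof (cases "\<exists>z i a b. z \<in> V \<and> z \<notin> cov Ps \<and> i < n \<and> a < b \<and> b < length (Ps ! i) \<and> (Ps ! i ! a, z) \<in> A \<and> (z, Ps ! i ! b) \<in> A")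
    case True
    then obtain z i a b where z: "z \<in> V" "z \<notin> cov Ps" and i: "i < n" and ab: "a < b" "b < length (Ps ! i)"
      and arcs: "(Ps ! i ! a, z) \<in> A" "(z, Ps ! i ! b) \<in> A" by blast
    let ?q = "Ps ! i"
    have qp: "is_path V A ?q" using PP[OF i] by blast
    have tot: "\<forall>l<length ?q. (?q ! l, z) \<in> A \<or> (z, ?q ! l) \<in> A"
    proof (intro allI impI)
      fix l assume l: "l < length ?q"
      have "?q ! l \<in> V" using qp l by (auto simp: is_path_def)
      moreover have "?q ! l \<noteq> z" using Pc[OF i l] z by auto
      ultimately show "(?q ! l, z) \<in> A \<or> (z, ?q ! l) \<in> A" using tour_tot[OF T _ z(1)] by blast
    qed
    have asym: "\<forall>l<length ?q. \<not> ((?q ! l, z) \<in> A \<and> (z, ?q ! l) \<in> A)"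
      using tour_asym[OF T] by blast
    obtain l where l: "a \<le> l" "Suc l \<le> b" "(?q ! l, z) \<in> A" "(z, ?q ! Suc l) \<in> A"
      using find_pos[OF tot asym ab arcs] by blast
    have wp: "is_path V A [z]" using z by (simp add: is_path_def)
    have dis: "set [z] \<inter> set ?q = {}" using z i len unfolding cov_def by auto
    have ins: "is_path V A (take (Suc l) ?q @ [z] @ drop (Suc l) ?q) \<and>
         hd (take (Suc l) ?q @ [z] @ drop (Suc l) ?q) = hd ?q \<and>
         last (take (Suc l) ?q @ [z] @ drop (Suc l) ?q) = last ?q \<and>
         set (take (Suc l) ?q @ [z] @ drop (Suc l) ?q) = set ?q \<union> set [z]"
      using insert_block[OF qp _ wp dis, of l] l ab by simp
    have "pre n V A u v (Ps[i := take (Suc l) ?q @ [z] @ drop (Suc l) ?q]) \<and>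
      cov (Ps[i := take (Suc l) ?q @ [z] @ drop (Suc l) ?q]) = cov Ps \<union> {z}"
    proof -
      have wc: "{z} \<inter> cov Ps = {}" using z by auto
      have st: "set (take (Suc l) ?q @ [z] @ drop (Suc l) ?q) = set ?q \<union> {z}" using ins by simp
      show ?thesis using replace[OF pr uv i _ _ _ st _ wc] ins by blast
    qed
    then show ?thesis using z by blast
  next
    case False
    note noins = False
    have cls: "\<And>z. z \<in> V \<Longrightarrow> z \<notin> cov Ps \<Longrightarrow> (\<forall>c\<in>cov Ps. (c, z) \<in> A) \<or> (\<forall>c\<in>cov Ps. (z, c) \<in> A)"
    proof -
      fix z assume zV: "z \<in> V" and zc: "z \<notin> cov Ps"
      have zu: "z \<noteq> u" "z \<noteq> v" using zc uc vc by auto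
      have uV: "u \<in> V" "v \<in> V" using covV uc vc by auto
      show "(\<forall>c\<in>cov Ps. (c, z) \<in> A) \<or> (\<forall>c\<in>cov Ps. (z, c) \<in> A)"
      proof (cases "(u, z) \<in> A")
        case True
        have vz: "(v, z) \<in> A"
        proof (rule ccontr)
          assume "(v, z) \<notin> A"
          then have "(z, v) \<in> A" using tour_tot[OF T zV uV(2)] zu by blast
          then obtain p where "p \<in> set Ps" "hd p = u" "last p = v"
          proof -
            have "\<forall>w\<in>V. (u, w) \<in> A \<longrightarrow> (w, v) \<in> A \<longrightarrow> (\<exists>p\<in>set Ps. hd p = u \<and> last p = v)"
              using pr by (simp add: pre_def)
            then show ?thesis using True zV \<open>(z, v) \<in> A\<close> that by blast
          qed
          then obtain i where i: "i < n" "hd (Ps ! i) = u" "last (Ps ! i) = v"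
            using len by (auto simp: in_set_conv_nth)
          moreover have "2 \<le> length (Ps ! i)" "Ps ! i ! 0 = hd (Ps ! i)"
            "Ps ! i ! (length (Ps ! i) - 1) = last (Ps ! i)" using PP[OF i(1)] by blast+
          ultimately have "0 < length (Ps ! i) - 1 \<and> length (Ps ! i) - 1 < length (Ps ! i) \<and>
            (Ps ! i ! 0, z) \<in> A \<and> (z, Ps ! i ! (length (Ps ! i) - 1)) \<in> A"
            using True \<open>(z, v) \<in> A\<close> by auto
          then show False using noins i(1) zV zc by blast
        qed
        have "\<forall>c\<in>cov Ps. (c, z) \<in> A"
        proof
          fix c assume c: "c \<in> cov Ps"
          then obtain i j where ij: "i < n" "j < length (Ps ! i)" "c = Ps ! i ! j"
            using cov_elem[OF c len] by blast
          have h0: "(Ps ! i ! 0, z) \<in> A" using PP[OF ij(1)] True vz by auto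
          show "(c, z) \<in> A"
          proof (cases "j = 0")
            case True then show ?thesis using h0 ij by simp
          next
            case False
            have "0 < j" using False by simp
            then have "(z, Ps ! i ! j) \<notin> A" using noins ij(1,2) h0 zV zc by blast
            then have "(z, c) \<notin> A" using ij(3) by simp
            moreover have "c \<in> V" "c \<noteq> z" using c covV zc by auto
            ultimately show ?thesis using tour_tot[OF T _ zV] by blast
          qed
        qed
        then show ?thesis by blast
      next
        case False
        then have zu': "(z, u) \<in> A" using tour_tot[OF T zV uV(1)] zu by blast
        have zv: "(z, v) \<in> A"
        proof (rule ccontr)
          assume "(z, v) \<notin> A"
          then have "(v, z) \<in> A" using tour_tot[OF T zV uV(2)] zu by blast
          then obtain p where "p \<in> set Ps" "hd p = v" "last p = u"
          proof -
            have "\<forall>w\<in>V. (v, w) \<in> A \<longrightarrow> (w, u) \<in> A \<longrightarrow> (\<exists>p\<in>set Ps. hd p = v \<and> last p = u)"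
              using pr by (simp add: pre_def)
            then show ?thesis using zu' zV \<open>(v, z) \<in> A\<close> that by blast
          qed
          then obtain i where i: "i < n" "hd (Ps ! i) = v" "last (Ps ! i) = u"
            using len by (auto simp: in_set_conv_nth)
          moreover have "2 \<le> length (Ps ! i)" "Ps ! i ! 0 = hd (Ps ! i)"
            "Ps ! i ! (length (Ps ! i) - 1) = last (Ps ! i)" using PP[OF i(1)] by blast+
          ultimately have "0 < length (Ps ! i) - 1 \<and> length (Ps ! i) - 1 < length (Ps ! i) \<and>
            (Ps ! i ! 0, z) \<in> A \<and> (z, Ps ! i ! (length (Ps ! i) - 1)) \<in> A"
            using zu' \<open>(v, z) \<in> A\<close> by auto
          then show False using noins i(1) zV zc by blast
        qed
        have "\<forall>c\<in>cov Ps. (z, c) \<in> A"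
        proof
          fix c assume c: "c \<in> cov Ps"
          then obtain i j where ij: "i < n" "j < length (Ps ! i)" "c = Ps ! i ! j"
            using cov_elem[OF c len] by blast
          have L: "2 \<le> length (Ps ! i)" using PP[OF ij(1)] by blast
          have hl: "(z, Ps ! i ! (length (Ps ! i) - 1)) \<in> A" using PP[OF ij(1)] zu' zv by auto
          show "(z, c) \<in> A"
          proof (cases "j = length (Ps ! i) - 1")
            case True then show ?thesis using hl ij by simp
          next
            case False
            then have jl: "j < length (Ps ! i) - 1" using ij by simp
            have "length (Ps ! i) - 1 < length (Ps ! i)" using L by simp
            then have "(Ps ! i ! j, z) \<notin> A" using noins ij(1) jl hl zV zc by blast
            then have "(c, z) \<notin> A" using ij(3) by simp
            moreover have "c \<in> V" "c \<noteq> z" using c covV zc by auto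
            ultimately show ?thesis using tour_tot[OF T _ zV] by blast
          qed
        qed
        then show ?thesis by blast
      qed
    qed
    have ex: "\<exists>x y. x \<in> V \<and> x \<notin> cov Ps \<and> y \<in> V \<and> y \<notin> cov Ps \<and>
       (\<forall>c\<in>cov Ps. (c, x) \<in> A) \<and> (\<forall>c\<in>cov Ps. (y, c) \<in> A) \<and> (x, y) \<in> A"
    proof -
      have scV: "\<forall>a\<in>V. \<forall>b\<in>V. \<exists>p. is_path_from_to V (A \<inter> V \<times> V) p a b"
        using sc by (simp add: strongly_connected_def)
      have uV: "u \<in> V" using covV uc by auto
      have arcP: "\<And>p a b i. is_path_from_to V (A \<inter> V \<times> V) p a b \<Longrightarrow> Suc i < length p \<Longrightarrow>
          (p ! i, p ! Suc i) \<in> A \<and> p ! i \<in> V \<and> p ! Suc i \<in> V"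
        unfolding is_path_from_to_def is_path_def by blast
      have neP: "\<And>p a b. is_path_from_to V (A \<inter> V \<times> V) p a b \<Longrightarrow> p \<noteq> [] \<and> hd p = a \<and> last p = b"
        unfolding is_path_from_to_def is_path_def by blast
      consider (O) "\<forall>c\<in>cov Ps. (c, w) \<in> A" | (I) "\<forall>c\<in>cov Ps. (w, c) \<in> A" using cls[OF w] by blast
      then show ?thesis
      proof cases
        case O
        obtain p where p: "is_path_from_to V (A \<inter> V \<times> V) p w u" using scV w(1) uV by blast
        let ?X = "{z. z \<in> V \<and> z \<notin> cov Ps \<and> (\<forall>c\<in>cov Ps. (c, z) \<in> A)}"
        have "p \<noteq> []" "hd p \<in> ?X" "last p \<notin> ?X" using neP[OF p] O w uc by auto
        then obtain l where l: "Suc l < length p" "p ! l \<in> ?X" "p ! Suc l \<notin> ?X"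
          using crossing[of p ?X] by blast
        have e: "(p ! l, p ! Suc l) \<in> A" "p ! Suc l \<in> V" using arcP[OF p l(1)] by auto
        have nc: "p ! Suc l \<notin> cov Ps"
        proof
          assume "p ! Suc l \<in> cov Ps"
          then have "(p ! Suc l, p ! l) \<in> A" using l(2) by blast
          then show False using tour_asym[OF T e(1)] by blast
        qed
        then have "\<forall>c\<in>cov Ps. (p ! Suc l, c) \<in> A" using cls[OF e(2)] l(3) e(2) by blast
        then show ?thesis using l(2) e nc by blast
      next
        case I
        obtain p where p: "is_path_from_to V (A \<inter> V \<times> V) p u w" using scV w(1) uV by blast
        let ?X = "{z. \<not> (z \<in> V \<and> z \<notin> cov Ps \<and> (\<forall>c\<in>cov Ps. (z, c) \<in> A))}"
        have "p \<noteq> []" "hd p \<in> ?X" "last p \<notin> ?X" using neP[OF p] I w uc by auto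
        then obtain l where l: "Suc l < length p" "p ! l \<in> ?X" "p ! Suc l \<notin> ?X"
          using crossing[of p ?X] by blast
        have e: "(p ! l, p ! Suc l) \<in> A" "p ! l \<in> V" using arcP[OF p l(1)] by auto
        have y: "p ! Suc l \<in> V" "p ! Suc l \<notin> cov Ps" "\<forall>c\<in>cov Ps. (p ! Suc l, c) \<in> A"
          using l(3) by auto
        have nc: "p ! l \<notin> cov Ps"
        proof
          assume "p ! l \<in> cov Ps"
          then have "(p ! Suc l, p ! l) \<in> A" using y(3) by blast
          then show False using tour_asym[OF T e(1)] by blast
        qed
        then have "\<forall>c\<in>cov Ps. (c, p ! l) \<in> A" using cls[OF e(2)] l(2) e(2) by blast
        then show ?thesis using y e nc by blast
      qed
    qed
    then obtain x y where xy: "x \<in> V" "x \<notin> cov Ps" "y \<in> V" "y \<notin> cov Ps"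
      "\<forall>c\<in>cov Ps. (c, x) \<in> A" "\<forall>c\<in>cov Ps. (y, c) \<in> A" "(x, y) \<in> A" by blast
    have n0: "0 < n" by (fact n)
    let ?q = "Ps ! 0"
    have qp: "is_path V A ?q" and L: "2 \<le> length ?q" using PP[OF n0] by blast+
    have xyne: "x \<noteq> y" using xy(7) tour_irr[OF T] by auto
    have Bp: "is_path V A [x, y]" using xy xyne by (simp add: is_path_def nth_Cons split: nat.splits)
    have dis: "set [x, y] \<inter> set ?q = {}" using xy n0 len unfolding cov_def by auto
    have "?q \<noteq> []" using L by auto
    then have c0: "?q ! 0 \<in> cov Ps" using Pc[OF n0, of 0] by simp
    have c1: "?q ! Suc 0 \<in> cov Ps" using Pc[OF n0, of 1] L by simp
    have a1: "(?q ! 0, hd [x, y]) \<in> A" using xy(5) c0 by simp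
    have a2: "(last [x, y], ?q ! Suc 0) \<in> A" using xy(6) c1 by simp
    have ins: "is_path V A (take (Suc 0) ?q @ [x, y] @ drop (Suc 0) ?q) \<and>
         hd (take (Suc 0) ?q @ [x, y] @ drop (Suc 0) ?q) = hd ?q \<and>
         last (take (Suc 0) ?q @ [x, y] @ drop (Suc 0) ?q) = last ?q \<and>
         set (take (Suc 0) ?q @ [x, y] @ drop (Suc 0) ?q) = set ?q \<union> set [x, y]"
      using insert_block[OF qp _ Bp dis a1 a2] L by simp
    have "pre n V A u v (Ps[0 := take (Suc 0) ?q @ [x, y] @ drop (Suc 0) ?q]) \<and>
      cov (Ps[0 := take (Suc 0) ?q @ [x, y] @ drop (Suc 0) ?q]) = cov Ps \<union> {x, y}"
    proof -
      have wc: "{x, y} \<inter> cov Ps = {}" using xy by auto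
      have st: "set (take (Suc 0) ?q @ [x, y] @ drop (Suc 0) ?q) = set ?q \<union> {x, y}" using ins by simp
      show ?thesis using replace[OF pr uv n0 _ _ _ st _ wc] ins by blast
    qed
    then show ?thesis using xy by blast
  qed
qed

lemma iterate:
  assumes T: "tournament V A" and sc: "strongly_connected V A" and uv: "u \<noteq> v" and n: "0 < n"
  shows "pre n V A u v Ps \<Longrightarrow> \<exists>Ps'. pre n V A u v Ps' \<and> V \<subseteq> cov Ps'"
proof (induction "card (V - cov Ps)" arbitrary: Ps rule: less_induct)
  case less
  show ?case
  proof (cases "V \<subseteq> cov Ps")
    case True then show ?thesis using less.prems by blast
  next
    case False
    then obtain w where w: "w \<in> V" "w \<notin> cov Ps" by blast
    obtain Ps' where P': "pre n V A u v Ps'" "cov Ps \<subset> cov Ps'"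
      using step[OF T sc less.prems uv n w] by blast
    have "cov Ps' \<subseteq> V" using pre_cov[OF P'(1) uv] by blast
    then have "V - cov Ps' \<subset> V - cov Ps" using P'(2) by blast
    moreover have "finite V" using T by (simp add: tournament_def)
    ultimately have "card (V - cov Ps') < card (V - cov Ps)" by (meson finite_Diff psubset_card_mono)
    then show ?thesis using less.hyps P'(1) by blast
  qed
qed

lemma path3: "is_path V A [x, y, z] \<longleftrightarrow> distinct [x, y, z] \<and> {x, y, z} \<subseteq> V \<and> (x, y) \<in> A \<and> (y, z) \<in> A"
  by (simp add: is_path_succ)

lemma path4: "is_path V A [x, y, z, t] \<longleftrightarrow> distinct [x, y, z, t] \<and> {x, y, z, t} \<subseteq> V \<and> (x, y) \<in> A \<and> (y, z) \<in> A \<and> (z, t) \<in> A"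
  by (simp add: is_path_succ)

definition good :: "'a set \<Rightarrow> ('a \<times> 'a) set \<Rightarrow> 'a \<Rightarrow> 'a \<Rightarrow> 'a list \<Rightarrow> bool" where
  "good V A u v g \<longleftrightarrow> g \<noteq> [] \<and> length g \<le> 2 \<and> (is_path V A (u # g @ [v]) \<or> is_path V A (v # g @ [u]))"

definition coll :: "'a set \<Rightarrow> ('a \<times> 'a) set \<Rightarrow> 'a \<Rightarrow> 'a \<Rightarrow> 'a list list \<Rightarrow> bool" where
  "coll V A u v gs \<longleftrightarrow> (\<forall>g\<in>set gs. good V A u v g) \<and> distinct (concat gs)"

lemma len_concat: "\<forall>g\<in>set gs. length g \<le> 2 \<Longrightarrow> length (concat gs) \<le> 2 * length gs"
  by (induction gs) auto

lemma extend:
  assumes T: "tournament V A" and ms: "m_strong (2 * k + 1) V A" and uv: "(u, v) \<in> A"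
    and c: "coll V A u v gs" and l: "length gs \<le> k"
  shows "\<exists>g. coll V A u v (g # gs)"
proof -
  let ?S = "set (concat gs)"
  have uvV: "u \<in> V" "v \<in> V" using tour_V[OF T uv] by auto
  have une: "u \<noteq> v" using uv tour_irr[OF T] by auto
  have vu: "(v, u) \<notin> A" using tour_asym[OF T uv] .
  have "card ?S \<le> length (concat gs)" by (rule card_length)
  also have "\<dots> \<le> 2 * length gs" using c len_concat unfolding coll_def good_def by blast
  finally have cS: "card ?S < 2 * k + 1" using l by linarith
  have gfacts: "\<And>g. g \<in> set gs \<Longrightarrow> set g \<subseteq> V \<and> u \<notin> set g \<and> v \<notin> set g"
  proof -
    fix g assume "g \<in> set gs"
    then have "is_path V A (u # g @ [v]) \<or> is_path V A (v # g @ [u])" using c unfolding coll_def good_def by blast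
    then show "set g \<subseteq> V \<and> u \<notin> set g \<and> v \<notin> set g" unfolding is_path_def by auto
  qed
  have SV: "?S \<subseteq> V" and uS: "u \<notin> ?S" and vS: "v \<notin> ?S" using gfacts by auto
  have "strongly_connected (V - ?S) A" using ms SV cS unfolding m_strong_def by blast
  then obtain p where p: "is_path_from_to (V - ?S) (A \<inter> (V - ?S) \<times> (V - ?S)) p v u"
    using uvV uS vS unfolding strongly_connected_def by blast
  let ?X = "insert v {w \<in> V. (u, w) \<in> A \<and> (v, w) \<in> A}"
  have pne: "p \<noteq> []" "hd p = v" "last p = u" using p unfolding is_path_from_to_def is_path_def by auto
  have "u \<notin> ?X" using une tour_irr[OF T] by auto
  then obtain l where l: "Suc l < length p" "p ! l \<in> ?X" "p ! Suc l \<notin> ?X"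
    using crossing[of p ?X] pne by auto
  let ?a = "p ! l" and ?b = "p ! Suc l"
  have ab: "(?a, ?b) \<in> A" "?a \<in> V - ?S" "?b \<in> V - ?S"
    using p l(1) unfolding is_path_from_to_def is_path_def by auto
  have abne: "?a \<noteq> ?b" using ab(1) tour_irr[OF T] by auto
  have "\<exists>g. good V A u v g \<and> set g \<inter> ?S = {} \<and> distinct g"
  proof (cases "?a = v")
    case True
    have bu: "?b \<noteq> u" using True ab(1) vu by auto
    have bv: "?b \<noteq> v" using l(3) by auto
    have "(u, ?b) \<notin> A" using l(3) True ab by auto
    then have "(?b, u) \<in> A" using tour_tot[OF T _ uvV(1) bu] ab(3) by blast
    then have "is_path V A [v, ?b, u]" unfolding path3 using bu bv une ab True uvV by auto
    then show ?thesis using ab(3) unfolding good_def by (intro exI[of _ "[?b]"]) auto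
  next
    case False
    then have aO: "(u, ?a) \<in> A" "(v, ?a) \<in> A" using l(2) by auto
    have bu: "?b \<noteq> u" using aO ab(1) tour_asym[OF T] by blast
    have bv: "?b \<noteq> v" using aO ab(1) tour_asym[OF T] by blast
    have au: "?a \<noteq> u" using aO tour_irr[OF T] by blast
    show ?thesis
    proof (cases "(v, ?b) \<in> A")
      case True
      then have "(u, ?b) \<notin> A" using l(3) ab by auto
      then have "(?b, u) \<in> A" using tour_tot[OF T _ uvV(1) bu] ab(3) by blast
      then have "is_path V A [v, ?b, u]" unfolding path3 using bu bv une ab True uvV by auto
      then show ?thesis using ab(3) unfolding good_def by (intro exI[of _ "[?b]"]) auto
    next
      case F2: False
      then have bvA: "(?b, v) \<in> A" using tour_tot[OF T _ uvV(2) bv] ab(3) by blast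
      show ?thesis
      proof (cases "(u, ?b) \<in> A")
        case True
        then have "is_path V A [u, ?b, v]" unfolding path3 using bu bv une ab bvA uvV by auto
        then show ?thesis using ab(3) unfolding good_def by (intro exI[of _ "[?b]"]) auto
      next
        case F3: False
        then have "(?b, u) \<in> A" using tour_tot[OF T _ uvV(1) bu] ab(3) by blast
        have "is_path V A [u, ?a, ?b, v]" unfolding path4 using bu bv une ab bvA uvV aO au abne False by auto
        then show ?thesis using ab(2,3) abne unfolding good_def by (intro exI[of _ "[?a, ?b]"]) auto
      qed
    qed
  qed
  then obtain g where "good V A u v g" "set g \<inter> ?S = {}" "distinct g" by blast
  then show ?thesis using c unfolding coll_def by (intro exI[of _ g]) auto
qed

lemma grow:
  assumes T: "tournament V A" and ms: "m_strong (2 * k + 1) V A" and uv: "(u, v) \<in> A"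
  shows "coll V A u v gs \<Longrightarrow> length gs + d = k + 1 \<Longrightarrow>
    \<exists>gs'. coll V A u v gs' \<and> length gs' = k + 1 \<and> set gs \<subseteq> set gs'"
proof (induction d arbitrary: gs)
  case 0 then show ?case by auto
next
  case (Suc d)
  obtain g where "coll V A u v (g # gs)" using extend[OF T ms uv Suc.prems(1)] Suc.prems(2) by auto
  then obtain gs' where "coll V A u v gs' \<and> length gs' = k + 1 \<and> set (g # gs) \<subseteq> set gs'"
    using Suc.IH[of "g # gs"] Suc.prems(2) by auto
  then show ?case by auto
qed

lemma concat_disj:
  "distinct (concat gs) \<Longrightarrow> i < length gs \<Longrightarrow> j < length gs \<Longrightarrow> i \<noteq> j \<Longrightarrow> set (gs ! i) \<inter> set (gs ! j) = {}"
proof (induction gs arbitrary: i j)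
  case Nil then show ?case by simp
next
  case (Cons g gs)
  have sub: "\<And>m. m < length gs \<Longrightarrow> set (gs ! m) \<subseteq> set (concat gs)"
    by (metis Sup_upper nth_mem set_concat image_eqI)
  show ?case
  proof (cases i)
    case 0
    then obtain j' where "j = Suc j'" using Cons.prems by (cases j) auto
    then show ?thesis using 0 Cons.prems sub[of j'] by auto
  next
    case (Suc i')
    show ?thesis
    proof (cases j)
      case 0 then show ?thesis using Suc Cons.prems sub[of i'] by auto
    next
      case (Suc j') then show ?thesis using \<open>i = Suc i'\<close> Cons.prems Cons.IH[of i' j'] by auto
    qed
  qed
qed

lemma distinct_by_internal:
  assumes "length Ps = n" "\<forall>i<n. \<forall>j<n. i \<noteq> j \<longrightarrow> internal (Ps ! i) \<inter> internal (Ps ! j) = {}"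
    "\<forall>i<n. 0 < i \<longrightarrow> internal (Ps ! i) \<noteq> {}"
  shows "distinct Ps"
  unfolding distinct_conv_nth
proof (intro allI impI)
  fix i j assume ij: "i < length Ps" "j < length Ps" "i \<noteq> j"
  show "Ps ! i \<noteq> Ps ! j"
  proof
    assume e: "Ps ! i = Ps ! j"
    have "internal (Ps ! i) \<inter> internal (Ps ! j) = {}" using assms ij by auto
    then have "internal (Ps ! i) = {}" using e by simp
    moreover have "internal (Ps ! j) = {}" using e calculation by simp
    ultimately show False using assms ij by (metis gr0I)
  qed
qed

definition full :: "'a set \<Rightarrow> ('a \<times> 'a) set \<Rightarrow> 'a \<Rightarrow> 'a \<Rightarrow> 'a list \<Rightarrow> 'a list" where
  "full V A u v g = (if is_path V A (u # g @ [v]) then u # g @ [v] else v # g @ [u])"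

lemma full_props:
  assumes "good V A u v g"
  shows "(is_path_from_to V A (full V A u v g) u v \<or> is_path_from_to V A (full V A u v g) v u)
    \<and> internal (full V A u v g) = set g \<and> set g \<noteq> {}"
  using assms unfolding good_def full_def is_path_from_to_def by (auto simp: internal_full)

lemma init:
  assumes T: "tournament V A" and ms: "m_strong (2 * k + 1) V A" and uv: "(u, v) \<in> A"
  shows "\<exists>Ps. pre (k + 2) V A u v Ps"
proof -
  have uvV: "u \<in> V" "v \<in> V" using tour_V[OF T uv] by auto
  have une: "u \<noteq> v" using uv tour_irr[OF T] by auto
  have vu: "(v, u) \<notin> A" using tour_asym[OF T uv] .
  obtain gs0 where g0: "coll V A u v gs0" "length gs0 \<le> 1"
    "(\<exists>w\<in>V. (v, w) \<in> A \<and> (w, u) \<in> A) \<longrightarrow> (\<exists>g\<in>set gs0. is_path V A (v # g @ [u]) \<and> \<not> is_path V A (u # g @ [v]))"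
  proof (cases "\<exists>w\<in>V. (v, w) \<in> A \<and> (w, u) \<in> A")
    case True
    then obtain w where w: "w \<in> V" "(v, w) \<in> A" "(w, u) \<in> A" by blast
    have wne: "w \<noteq> u" "w \<noteq> v" using w tour_irr[OF T] by auto
    have p1: "is_path V A (v # [w] @ [u])" using w wne une uvV by (simp add: path3)
    have p2: "\<not> is_path V A (u # [w] @ [v])" using w(2) tour_asym[OF T] by (simp add: path3)
    have "coll V A u v [[w]]" unfolding coll_def good_def using p1 by auto
    then show ?thesis using that p1 p2 by auto
  next
    case False
    have "coll V A u v []" by (simp add: coll_def)
    then show ?thesis using that False by auto
  qed
  obtain gs where gs: "coll V A u v gs" "length gs = k + 1" "set gs0 \<subseteq> set gs"
    using grow[OF T ms uv g0(1), of "k + 1 - length gs0"] g0(2) by auto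
  define Ps where "Ps = [u, v] # map (full V A u v) gs"
  have gd: "\<And>g. g \<in> set gs \<Longrightarrow> good V A u v g" using gs(1) by (simp add: coll_def)
  have len: "length Ps = k + 2" using gs(2) by (simp add: Ps_def)
  have P0: "Ps ! 0 = [u, v]" by (simp add: Ps_def)
  have PS: "\<And>j. j < k + 1 \<Longrightarrow> Ps ! Suc j = full V A u v (gs ! j)" using gs(2) by (simp add: Ps_def)
  have int0: "internal (Ps ! 0) = {}" using P0 by (simp add: internal_def)
  have intS: "\<And>j. j < k + 1 \<Longrightarrow> internal (Ps ! Suc j) = set (gs ! j) \<and> set (gs ! j) \<noteq> {}"
    using PS full_props gd gs(2) by (metis nth_mem)
  have disj: "\<forall>i<k + 2. \<forall>j<k + 2. i \<noteq> j \<longrightarrow> internal (Ps ! i) \<inter> internal (Ps ! j) = {}"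
  proof (intro allI impI)
    fix i j assume i: "i < k + 2" and j: "j < k + 2" and ij: "i \<noteq> j"
    show "internal (Ps ! i) \<inter> internal (Ps ! j) = {}"
    proof (cases i)
      case 0 then show ?thesis using int0 by simp
    next
      case (Suc i')
      show ?thesis
      proof (cases j)
        case 0 then show ?thesis using int0 by simp
      next
        case (Suc j')
        have "distinct (concat gs)" using gs(1) by (simp add: coll_def)
        then have "set (gs ! i') \<inter> set (gs ! j') = {}"
          using concat_disj[of gs i' j'] \<open>i = Suc i'\<close> Suc i j ij gs(2) by auto
        then show ?thesis using intS[of i'] intS[of j'] \<open>i = Suc i'\<close> Suc i j by auto
      qed
    qed
  qed
  have nonempty: "\<forall>i<k + 2. 0 < i \<longrightarrow> internal (Ps ! i) \<noteq> {}"
  proof (intro allI impI)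
    fix i assume "i < k + 2" "0 < i"
    then obtain i' where "i = Suc i'" "i' < k + 1" by (cases i) auto
    then show "internal (Ps ! i) \<noteq> {}" using intS by auto
  qed
  have dist: "distinct Ps" using distinct_by_internal[OF len disj nonempty] .
  have uvp: "is_path_from_to V A [u, v] u v"
    unfolding is_path_from_to_def is_path_def using uv une uvV by (auto simp: nth_Cons split: nat.splits)
  have paths: "\<forall>p\<in>set Ps. is_path_from_to V A p u v \<or> is_path_from_to V A p v u"
  proof
    fix p assume "p \<in> set Ps"
    then have "p = [u, v] \<or> (\<exists>g\<in>set gs. p = full V A u v g)" unfolding Ps_def by auto
    then show "is_path_from_to V A p u v \<or> is_path_from_to V A p v u"
      using uvp full_props[OF gd] by blast
  qed
  have m1: "\<forall>w\<in>V. (u, w) \<in> A \<longrightarrow> (w, v) \<in> A \<longrightarrow> (\<exists>p\<in>set Ps. hd p = u \<and> last p = v)"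
    unfolding Ps_def by auto
  have m2: "\<forall>w\<in>V. (v, w) \<in> A \<longrightarrow> (w, u) \<in> A \<longrightarrow> (\<exists>p\<in>set Ps. hd p = v \<and> last p = u)"
  proof (intro ballI impI)
    fix w assume "w \<in> V" "(v, w) \<in> A" "(w, u) \<in> A"
    then obtain g where g: "g \<in> set gs" "is_path V A (v # g @ [u])" "\<not> is_path V A (u # g @ [v])"
      using g0(3) gs(3) by blast
    then have "full V A u v g \<in> set Ps" "full V A u v g = v # g @ [u]" unfolding Ps_def full_def by auto
    then show "\<exists>p\<in>set Ps. hd p = v \<and> last p = u" by (intro bexI[of _ "full V A u v g"]) auto
  qed
  have "pre (k + 2) V A u v Ps" unfolding pre_def using len dist paths disj m1 m2 by blast
  then show ?thesis by blast
qed

lemma wc_sym: "weak_container n V A u v Ps \<longleftrightarrow> weak_container n V A v u Ps"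
  unfolding weak_container_def by blast

lemma main_dir:
  assumes T: "tournament V A" and ms: "m_strong (2 * k + 1) V A" and uv: "(u, v) \<in> A"
  shows "\<exists>Ps. weak_container (k + 2) V A u v Ps"
proof -
  have une: "u \<noteq> v" using uv tour_irr[OF T] by auto
  have sc: "strongly_connected V A"
  proof -
    have "\<forall>S. S \<subseteq> V \<longrightarrow> card S < 2 * k + 1 \<longrightarrow> strongly_connected (V - S) A"
      using ms unfolding m_strong_def by blast
    then have "strongly_connected (V - {}) A" by (metis card.empty empty_subsetI zero_less_Suc Suc_eq_plus1)
    then show ?thesis by simp
  qed
  obtain Ps where "pre (k + 2) V A u v Ps" using init[OF T ms uv] by blast
  then obtain Ps' where P: "pre (k + 2) V A u v Ps'" "V \<subseteq> cov Ps'"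
    using iterate[OF T sc une, of "k + 2"] by auto
  then have "weak_container (k + 2) V A u v Ps'"
    unfolding weak_container_def pre_def cov_def by blast
  then show ?thesis by blast
qed

theorem theorem2p7:
  fixes V :: "'a set" and A :: "('a \<times> 'a) set" and k :: nat
  assumes "tournament V A"
    and "m_strong (2 * k + 1) V A"
  shows "weakly_star_connected (k + 2) V A"
  unfolding weakly_star_connected_def
proof (intro ballI impI)
  fix u v assume uv: "u \<in> V" "v \<in> V" "u \<noteq> v"
  then consider "(u, v) \<in> A" | "(v, u) \<in> A" using tour_tot[OF assms(1)] by blast
  then show "\<exists>Ps. weak_container (k + 2) V A u v Ps"
  proof cases
    case 1 show ?thesis using main_dir[OF assms 1] .
  next
    case 2
    obtain Ps where "weak_container (k + 2) V A v u Ps" using main_dir[OF assms 2] by blast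
    then have "weak_container (k + 2) V A u v Ps" using wc_sym by metis
    then show ?thesis by blast
  qed
qed

end
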